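(* For every $\delta>0$ there exist $n\ge1$, a pool $\mathcal D=\{(p_i,t_i)\}_{i=1}^n$ with $p_i\in[0,1]$, $t_i>0$, and a budget $T>0$, such that the greedy forward selection strategy (defined in the context) outputs an ensemble $S$ with majority-voting accuracy $q(S)\le 1/2+\delta$, while there is an index set $\mathcal L\subseteq\{1,\dots,n\}$ with $\sum_{i\in\mathcal L}t_i\le T$ and $q(\mathcal L)\ge 1-\delta$. In other words, the difference between the optimal constrained ensemble accuracy and the accuracy produced by greedy forward selection can be arbitrarily close to $1/2$.
   Context: A pool consists of candidate members $i=1,\dots,n$, each with accuracy $p_i\in[0,1]$ and cost $t_i>0$; a budget $T>0$ is given. For a nonempty index set $\mathcal L$ with $|\mathcal L|=\ell$, the (majority voting) accuracy is $q(\mathcal L)=\sum_{k=\lfloor \ell/2\rfloor+1}^{\ell}\sum_{\mathcal I\subseteq\mathcal L,|\mathcal I|=k}\prod_{i\in\mathcal I}p_i\prod_{j\in\mathcal L\setminus\mathcal I}(1-p_j)$. An index set $\mathcal L$ is feasible if $\sum_{i\in\mathcal L}t_i\le T$. Greedy forward selection: start with $S$ consisting of a single member of maximal accuracy $p_i$; then repeatedly, among the members $j\notin S$ with $\sum_{i\in S}t_i+t_j\le T$, take one maximizing $q(S\cup\{j\})$; if this value is strictly larger than $q(S)$, add $j$ to $S$ and continue, otherwise (or if no such $j$ exists) stop and output $S$. *)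

theory Defs
  imports Complex_Main
begin

definition mv_acc :: "(nat \<Rightarrow> real) \<Rightarrow> nat set \<Rightarrow> real" where
  "mv_acc p L = (\<Sum>I\<in>{I. I \<subseteq> L \<and> card L div 2 + 1 \<le> card I}.
                   (\<Prod>i\<in>I. p i) * (\<Prod>j\<in>L - I. 1 - p j))"

definition candidates :: "nat \<Rightarrow> (nat \<Rightarrow> real) \<Rightarrow> real \<Rightarrow> nat set \<Rightarrow> nat set" where
  "candidates n t T S = {j \<in> {1..n}. j \<notin> S \<and> sum t S + t j \<le> T}"

text \<open>States reachable by (any tie-breaking of) greedy forward selection.\<close>
inductive greedy_reach :: "nat \<Rightarrow> (nat \<Rightarrow> real) \<Rightarrow> (nat \<Rightarrow> real) \<Rightarrow> real \<Rightarrow> nat set \<Rightarrow> bool"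
  for n p t T where
  start: "\<lbrakk> i \<in> {1..n}; \<forall>k\<in>{1..n}. p k \<le> p i \<rbrakk> \<Longrightarrow> greedy_reach n p t T {i}"
| step: "\<lbrakk> greedy_reach n p t T S; j \<in> candidates n t T S;
           \<forall>k\<in>candidates n t T S. mv_acc p (insert k S) \<le> mv_acc p (insert j S);
           mv_acc p (insert j S) > mv_acc p S \<rbrakk>
         \<Longrightarrow> greedy_reach n p t T (insert j S)"

definition greedy_output :: "nat \<Rightarrow> (nat \<Rightarrow> real) \<Rightarrow> (nat \<Rightarrow> real) \<Rightarrow> real \<Rightarrow> nat set \<Rightarrow> bool" where
  "greedy_output n p t T S \<longleftrightarrow> greedy_reach n p t T S \<and>
     (\<forall>j\<in>candidates n t T S. mv_acc p (insert j S) \<le> mv_acc p S)"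

end

theory Submission
  imports Defs
begin

lemma mv_single: "mv_acc p {i} = p i"
proof -
  have "{I. I \<subseteq> {i} \<and> card {i} div 2 + 1 \<le> card I} = {{i}}"
    by (auto simp: subset_singleton_iff)
  then show ?thesis by (simp add: mv_acc_def)
qed

lemma mv_pair: assumes "i \<noteq> j" shows "mv_acc p {i, j} = p i * p j"
proof -
  have "{I. I \<subseteq> {i,j} \<and> card {i,j} div 2 + 1 \<le> card I} = {{i,j}}"
  proof (rule set_eqI, rule iffI)
    fix I assume "I \<in> {I. I \<subseteq> {i,j} \<and> card {i,j} div 2 + 1 \<le> card I}"
    then have "I \<subseteq> {i,j}" "2 \<le> card I" using assms by auto
    then show "I \<in> {{i,j}}"
      by (metis card_seteq finite.emptyI finite.insertI assms card_2_iff singletonI)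
  qed (use assms in auto)
  then show ?thesis using assms by (simp add: mv_acc_def)
qed

lemma tail_bound:
  fixes P Q :: real and L :: "nat set" and r :: nat
  assumes fin: "finite L" and cL: "card L = 2*r+1"
    and pL: "\<forall>i\<in>L. p i = P" and PQ: "P + Q = 1" and Q0: "0 \<le> Q" and QP: "Q \<le> P"
  shows "1 - mv_acc p L \<le> 2^(2*r+1) * (P*Q)^r"
proof -
  define tm where "tm = (\<lambda>I. (\<Prod>i\<in>I. p i) * (\<Prod>j\<in>L - I. 1 - p j))"
  define A where "A = {I. I \<subseteq> L \<and> card L div 2 + 1 \<le> card I}"
  define B where "B = Pow L - A"
  have AP: "A \<subseteq> Pow L" by (auto simp: A_def)
  have "(\<Prod>i\<in>L. p i + (1 - p i)) = (\<Sum>X\<in>Pow L. tm X)"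
    unfolding tm_def by (rule prod_add[OF fin, of p "\<lambda>i. 1 - p i"])
  then have one: "1 = (\<Sum>X\<in>Pow L. tm X)" by simp
  have "(\<Sum>X\<in>Pow L. tm X) = (\<Sum>X\<in>A. tm X) + (\<Sum>X\<in>B. tm X)"
    unfolding B_def using AP fin by (metis add.commute finite_Pow_iff sum.subset_diff)
  moreover have "mv_acc p L = (\<Sum>X\<in>A. tm X)" by (simp add: mv_acc_def A_def tm_def)
  ultimately have eq: "1 - mv_acc p L = (\<Sum>X\<in>B. tm X)" using one by simp
  have PQ0: "0 \<le> P" using Q0 QP by simp
  have bnd: "tm X \<le> (P*Q)^r" if "X \<in> B" for X
  proof -
    have XL: "X \<subseteq> L" and ck: "card X \<le> r" using that cL by (auto simp: B_def A_def)
    have fX: "finite X" using XL fin finite_subset by blast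
    have t: "tm X = P ^ card X * Q ^ (2*r+1 - card X)"
    proof -
      have "(\<Prod>i\<in>X. p i) = P ^ card X" using pL XL by (simp add: subset_iff)
      moreover have "(\<Prod>j\<in>L - X. 1 - p j) = Q ^ card (L - X)" proof -
        have "1 - P = Q" using PQ by simp
        then show ?thesis using pL by simp
      qed
      moreover have "card (L - X) = 2*r+1 - card X" using card_Diff_subset[OF fX XL] cL by simp
      ultimately show ?thesis by (simp add: tm_def)
    qed
    define k where "k = card X"
    define d where "d = r - k"
    have rk: "r = k + d" and e: "2*r+1 - k = k + 2*d + 1" using ck by (auto simp: k_def d_def)
    have "P ^ k * Q ^ (k + 2*d + 1) = (P*Q)^k * ((Q*Q)^d * Q)"
      by (simp add: power_add power_mult_distrib power_mult algebra_simps power2_eq_square)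
    also have "\<dots> \<le> (P*Q)^k * ((P*Q)^d * 1)"
    proof (rule mult_left_mono)
      have "Q*Q \<le> P*Q" using QP Q0 by (simp add: mult_right_mono)
      then have "(Q*Q)^d \<le> (P*Q)^d" by (simp add: power_mono Q0)
      moreover have "Q \<le> 1" using PQ PQ0 by simp
      ultimately show "(Q*Q)^d * Q \<le> (P*Q)^d * 1"
        using Q0 PQ0 by (meson mult_mono zero_le_mult_iff zero_le_power)
    qed (use PQ0 Q0 in simp)
    also have "\<dots> = (P*Q)^r" by (simp add: rk power_add)
    finally show ?thesis using t e by (simp add: k_def)
  qed
  have "(\<Sum>X\<in>B. tm X) \<le> (\<Sum>X\<in>B. (P*Q)^r)" using bnd by (rule sum_mono)
  also have "\<dots> = real (card B) * (P*Q)^r" by simp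
  also have "\<dots> \<le> 2^(2*r+1) * (P*Q)^r"
  proof (rule mult_right_mono)
    have "card B \<le> card (Pow L)" unfolding B_def using fin by (simp add: card_mono)
    then have "card B \<le> 2^(2*r+1)" using fin cL by (simp add: card_Pow)
    then show "real (card B) \<le> 2^(2*r+1)"
      by (metis of_nat_le_iff of_nat_numeral of_nat_power)
  qed (use PQ0 Q0 in simp)
  finally show ?thesis using eq by simp
qed

theorem proposition1:
  shows "\<forall>\<delta>::real. \<delta> > 0 \<longrightarrow>
    (\<exists>(n::nat) (p::nat \<Rightarrow> real) (t::nat \<Rightarrow> real) (T::real).
       n \<ge> 1 \<and> (\<forall>i\<in>{1..n}. 0 \<le> p i \<and> p i \<le> 1 \<and> t i > 0) \<and> T > 0 \<and>
       (\<exists>S. greedy_output n p t T S) \<and>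
       (\<forall>S. greedy_output n p t T S \<longrightarrow> mv_acc p S \<le> 1/2 + \<delta>) \<and>
       (\<exists>L. L \<subseteq> {1..n} \<and> L \<noteq> {} \<and> sum t L \<le> T \<and> mv_acc p L \<ge> 1 - \<delta>))"
proof (intro allI impI)
  fix \<delta> :: real assume d0: "\<delta> > 0"
  define e where "e = min \<delta> (1/4)"
  define P :: real where "P = 1/2 + e"
  define Q :: real where "Q = 1/2 - e"
  have e0: "0 < e" "e \<le> \<delta>" "e \<le> 1/4" using d0 by (auto simp: e_def)
  have ee: "e*e \<le> 1/4 * (1/4)" using e0 by (intro mult_mono) auto
  have c: "4*(P*Q) < 1" "0 \<le> 4*(P*Q)" using e0 ee by (auto simp: P_def Q_def algebra_simps power2_eq_square)
  obtain r where r: "(4*(P*Q))^r < \<delta>/2" using real_arch_pow_inv[OF _ c(1), of "\<delta>/2"] d0 by auto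
  define n where "n = 2*r+1"
  define p :: "nat \<Rightarrow> real" where "p = (\<lambda>_. P)"
  define t :: "nat \<Rightarrow> real" where "t = (\<lambda>_. 1)"
  define T :: real where "T = real n"
  have P1: "P \<le> 1" "0 \<le> P" "P*P < P" using e0 by (auto simp: P_def)
  have reach: "\<exists>i. S = {i}" if "greedy_reach n p t T S" for S
    using that
  proof induction
    case (start i) then show ?case by auto
  next
    case (step S j)
    then obtain i where S: "S = {i}" by auto
    have "j \<noteq> i" using step(2) S by (auto simp: candidates_def)
    then have "mv_acc p (insert j S) = P * P" using S mv_pair[of j i p] by (simp add: p_def)
    moreover have "mv_acc p S = P" using S by (simp add: mv_single p_def)
    ultimately show ?case using step(4) P1 by simp
  qed
  show "\<exists>(n::nat) (p::nat \<Rightarrow> real) (t::nat \<Rightarrow> real) (T::real).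
       n \<ge> 1 \<and> (\<forall>i\<in>{1..n}. 0 \<le> p i \<and> p i \<le> 1 \<and> t i > 0) \<and> T > 0 \<and>
       (\<exists>S. greedy_output n p t T S) \<and>
       (\<forall>S. greedy_output n p t T S \<longrightarrow> mv_acc p S \<le> 1/2 + \<delta>) \<and>
       (\<exists>L. L \<subseteq> {1..n} \<and> L \<noteq> {} \<and> sum t L \<le> T \<and> mv_acc p L \<ge> 1 - \<delta>)"
  proof (intro exI conjI)
    show "1 \<le> n" by (simp add: n_def)
    show "\<forall>i\<in>{1..n}. 0 \<le> p i \<and> p i \<le> 1 \<and> t i > 0" using P1 by (simp add: p_def t_def)
    show "T > 0" by (simp add: T_def n_def)
    show "greedy_output n p t T {1}"
      unfolding greedy_output_def
    proof
      show "greedy_reach n p t T {1}"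
        by (rule greedy_reach.start) (auto simp: n_def p_def)
      show "\<forall>j\<in>candidates n t T {1}. mv_acc p (insert j {1}) \<le> mv_acc p {1}"
      proof
        fix j assume "j \<in> candidates n t T {1}"
        then have "j \<noteq> 1" by (auto simp: candidates_def)
        then show "mv_acc p (insert j {1}) \<le> mv_acc p {1}"
          using mv_pair[of j 1 p] mv_single[of p 1] P1 by (simp add: p_def)
      qed
    qed
    show "\<forall>S. greedy_output n p t T S \<longrightarrow> mv_acc p S \<le> 1/2 + \<delta>"
    proof (intro allI impI)
      fix S assume "greedy_output n p t T S"
      then obtain i where "S = {i}" using reach by (auto simp: greedy_output_def)
      then show "mv_acc p S \<le> 1/2 + \<delta>" using e0 by (simp add: mv_single p_def P_def)
    qed
    show "{1..n} \<subseteq> {1..n}" by simp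
    show "{1..n} \<noteq> {}" by (simp add: n_def)
    show "sum t {1..n} \<le> T" by (simp add: t_def T_def)
    have "1 - mv_acc p {1..n} \<le> 2^(2*r+1) * (P*Q)^r"
      by (rule tail_bound[where Q=Q]) (use e0 in \<open>auto simp: n_def p_def P_def Q_def\<close>)
    also have "\<dots> = 2 * (4*(P*Q))^r"
      by (simp add: power_mult power_mult_distrib)
    also have "\<dots> < \<delta>" using r by simp
    finally show "1 - \<delta> \<le> mv_acc p {1..n}" by simp
  qed
qed

end
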